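(* Let $X\subseteq\mathbb{C}^n$ be a complex analytic variety, $x\in X$, and $M\subseteq\mathcal{O}_{X,x}^p$ an $\mathcal{O}_{X,x}$-submodule of generic rank $k$ on each irreducible component of $X$. Then $M_{S_2}\subseteq M_{S_3}$.
   Context: For an analytic map germ $\psi=(\psi_1,\dots,\psi_p):X\to\mathrm{Hom}(\mathbb{C}^p,\mathbb{C})$ and $h=(h_1,\dots,h_p)$, $\psi\cdot h=\sum_i\psi_ih_i$; $\psi\cdot M$ is the ideal generated by $\{\psi\cdot g:g\in M\}$. For an ideal $I\subseteq\mathcal{O}_{X,x}$, $I_S$ denotes its Lipschitz saturation: $f\in I_S$ iff $\pi_S^*(f)\in\pi_S^*(I)$ where $\pi_S:SB_I(X)\to X$ is the projection from the Pham–Teissier saturation of the blow-up along $I$ (equivalently, $(f\circ\pi_1,f\circ\pi_2)$ lies in the integral closure of the $\mathcal{O}_{X\times X}$-module generated by $(g\circ\pi_1,g\circ\pi_2)$, $g\in I$, with $\pi_1,\pi_2$ the projections $X\times X\to X$). $I_k(M)$ and $I_k(h,M)$ are the ideals of $k\times k$ minors of $[M]$ and $[h,M]$ respectively, $[M]$ a matrix of generators. $M_{S_2}=\{h:\psi\cdot h\in(\psi\cdot M)_S\ \forall\psi\}$; $M_{S_3}=\{h: I_k(h,M)\subseteq(I_k(M))_S\}$. *)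

theory Defs
  imports "HOL-Analysis.Analysis"
begin

text \<open>Points of C^n are elements of complex^'n.  Germs are represented by
functions; all notions below only depend on the values near the base point.\<close>

definition holo_n :: "(complex^'n) set \<Rightarrow> (complex^'n \<Rightarrow> complex) \<Rightarrow> bool" where
  "holo_n U F \<longleftrightarrow> open U \<and>
     (\<forall>z\<in>U. \<exists>L. (F has_derivative L) (at z) \<and> (\<forall>(c::complex) v. L (c *s v) = c * L v))"

definition analytic_variety :: "(complex^'n) set \<Rightarrow> bool" where
  "analytic_variety X \<longleftrightarrow> (\<forall>y\<in>X. \<exists>U Fs. open U \<and> y \<in> U \<and> (\<forall>F\<in>set Fs. holo_n U F) \<and>
       X \<inter> U = {z\<in>U. \<forall>F\<in>set Fs. F z = 0})"

text \<open>f represents an element of O_{X,x}.\<close>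
definition anat :: "(complex^'n) set \<Rightarrow> complex^'n \<Rightarrow> (complex^'n \<Rightarrow> complex) \<Rightarrow> bool" where
  "anat X x f \<longleftrightarrow> (\<exists>U F. open U \<and> x \<in> U \<and> holo_n U F \<and> (\<forall>y\<in>X \<inter> U. f y = F y))"

definition anat_vec :: "(complex^'n) set \<Rightarrow> complex^'n \<Rightarrow> (complex^'n \<Rightarrow> complex^'p) \<Rightarrow> bool" where
  "anat_vec X x h \<longleftrightarrow> (\<forall>i. anat X x (\<lambda>y. h y $ i))"

definition germ_eq :: "(complex^'n) set \<Rightarrow> complex^'n \<Rightarrow> (complex^'n \<Rightarrow> 'b) \<Rightarrow> (complex^'n \<Rightarrow> 'b) \<Rightarrow> bool" where
  "germ_eq X x f g \<longleftrightarrow> (\<exists>U. open U \<and> x \<in> U \<and> (\<forall>y\<in>X \<inter> U. f y = g y))"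

definition ideal_gen :: "(complex^'n) set \<Rightarrow> complex^'n \<Rightarrow> (complex^'n \<Rightarrow> complex) set \<Rightarrow> (complex^'n \<Rightarrow> complex) set" where
  "ideal_gen X x S = {f. anat X x f \<and> (\<exists>(N::nat) as gs. (\<forall>l<N. anat X x (as l) \<and> gs l \<in> S) \<and>
       germ_eq X x f (\<lambda>y. \<Sum>l<N. as l y * gs l y))}"

definition module_gen :: "(complex^'n) set \<Rightarrow> complex^'n \<Rightarrow> (complex^'n \<Rightarrow> complex^'p) set \<Rightarrow> (complex^'n \<Rightarrow> complex^'p) set" where
  "module_gen X x G = {h. anat_vec X x h \<and> (\<exists>(N::nat) as gs. (\<forall>l<N. anat X x (as l) \<and> gs l \<in> G) \<and>
       germ_eq X x h (\<lambda>y. \<Sum>l<N. as l y *s gs l y))}"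

definition curve_germ :: "(complex^'n) set \<Rightarrow> complex^'n \<Rightarrow> (complex \<Rightarrow> complex^'n) \<Rightarrow> bool" where
  "curve_germ X x \<phi> \<longleftrightarrow> \<phi> 0 = x \<and> (\<exists>r>0. (\<forall>i. (\<lambda>t. \<phi> t $ i) holomorphic_on ball 0 r) \<and> \<phi> ` ball 0 r \<subseteq> X)"

text \<open>Lipschitz saturation of the ideal I generated by S: f in I_S iff
 (f o pi1, f o pi2) lies in the integral closure of the O_{X x X}-module generated by
 (g o pi1, g o pi2), g in I; integral closure of modules taken in Gaffney's sense
 (curve criterion): along every analytic curve (phi1,phi2):(C,0) -> (X x X,(x,x)).\<close>
definition lip_sat :: "(complex^'n) set \<Rightarrow> complex^'n \<Rightarrow> (complex^'n \<Rightarrow> complex) set \<Rightarrow> (complex^'n \<Rightarrow> complex) set" where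
  "lip_sat X x S = {f. anat X x f \<and> (\<forall>\<phi>1 \<phi>2. curve_germ X x \<phi>1 \<longrightarrow> curve_germ X x \<phi>2 \<longrightarrow>
      (\<exists>r>0. \<exists>(N::nat) bs gs. (\<forall>l<N. bs l holomorphic_on ball 0 r \<and> gs l \<in> ideal_gen X x S) \<and>
         (\<forall>t\<in>ball 0 r. f (\<phi>1 t) = (\<Sum>l<N. bs l t * gs l (\<phi>1 t)) \<and>
                         f (\<phi>2 t) = (\<Sum>l<N. bs l t * gs l (\<phi>2 t)))))}"

definition kdet :: "nat \<Rightarrow> (nat \<Rightarrow> nat \<Rightarrow> complex) \<Rightarrow> complex" where
  "kdet k A = (\<Sum>\<sigma> | \<sigma> permutes {..<k}. of_int (sign \<sigma>) * (\<Prod>i<k. A i (\<sigma> i)))"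

text \<open>The k x k minors of a matrix of germs A y r c (rows r, columns c).\<close>
definition minors :: "nat \<Rightarrow> (complex^'n \<Rightarrow> 'r \<Rightarrow> 'c \<Rightarrow> complex) \<Rightarrow> (complex^'n \<Rightarrow> complex) set" where
  "minors k A = {(\<lambda>y. kdet k (\<lambda>i l. A y (rs i) (cs l))) | rs cs. True}"

definition mat_of :: "('m \<Rightarrow> complex^'n \<Rightarrow> complex^'p) \<Rightarrow> complex^'n \<Rightarrow> 'p \<Rightarrow> 'm \<Rightarrow> complex" where
  "mat_of g y i j = g j y $ i"

text \<open>[h,M]: first column h (index None), then the generators.\<close>
definition mat_hM :: "(complex^'n \<Rightarrow> complex^'p) \<Rightarrow> ('m \<Rightarrow> complex^'n \<Rightarrow> complex^'p) \<Rightarrow> complex^'n \<Rightarrow> 'p \<Rightarrow> 'm option \<Rightarrow> complex" where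
  "mat_hM h g y i c = (case c of None \<Rightarrow> h y $ i | Some j \<Rightarrow> g j y $ i)"

definition Ik :: "(complex^'n) set \<Rightarrow> complex^'n \<Rightarrow> nat \<Rightarrow> (complex^'n \<Rightarrow> 'r \<Rightarrow> 'c \<Rightarrow> complex) \<Rightarrow> (complex^'n \<Rightarrow> complex) set" where
  "Ik X x k A = ideal_gen X x (minors k A)"

definition pair_dot :: "(complex^'n \<Rightarrow> complex^'p) \<Rightarrow> (complex^'n \<Rightarrow> complex^'p) \<Rightarrow> complex^'n \<Rightarrow> complex" where
  "pair_dot \<psi> h y = (\<Sum>i\<in>UNIV. \<psi> y $ i * h y $ i)"

definition M_S2 :: "(complex^'n) set \<Rightarrow> complex^'n \<Rightarrow> (complex^'n \<Rightarrow> complex^'p) set \<Rightarrow> (complex^'n \<Rightarrow> complex^'p) set" where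
  "M_S2 X x M = {h. anat_vec X x h \<and> (\<forall>\<psi>. anat_vec X x \<psi> \<longrightarrow>
       pair_dot \<psi> h \<in> lip_sat X x ((\<lambda>g. pair_dot \<psi> g) ` M))}"

definition M_S3 :: "(complex^'n) set \<Rightarrow> complex^'n \<Rightarrow> nat \<Rightarrow> ('m \<Rightarrow> complex^'n \<Rightarrow> complex^'p) \<Rightarrow> (complex^'n \<Rightarrow> complex^'p) set" where
  "M_S3 X x k g = {h. anat_vec X x h \<and> Ik X x k (mat_hM h g) \<subseteq> lip_sat X x (minors k (mat_of g))}"

definition analytic_subgerm :: "(complex^'n) set \<Rightarrow> complex^'n \<Rightarrow> (complex^'n) set \<Rightarrow> bool" where
  "analytic_subgerm X x Z \<longleftrightarrow> Z \<subseteq> X \<and> (\<exists>U Fs. open U \<and> x \<in> U \<and> (\<forall>F\<in>set Fs. holo_n U F) \<and>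
       Z \<inter> U = {z\<in>X \<inter> U. \<forall>F\<in>set Fs. F z = 0})"

definition germ_sub :: "complex^'n \<Rightarrow> (complex^'n) set \<Rightarrow> (complex^'n) set \<Rightarrow> bool" where
  "germ_sub x Z Z' \<longleftrightarrow> (\<exists>U. open U \<and> x \<in> U \<and> Z \<inter> U \<subseteq> Z')"

definition irreducible_germ :: "(complex^'n) set \<Rightarrow> complex^'n \<Rightarrow> (complex^'n) set \<Rightarrow> bool" where
  "irreducible_germ X x Z \<longleftrightarrow> analytic_subgerm X x Z \<and> x \<in> Z \<and>
     (\<forall>Z1 Z2. analytic_subgerm X x Z1 \<longrightarrow> analytic_subgerm X x Z2 \<longrightarrow>
        germ_sub x Z (Z1 \<union> Z2) \<longrightarrow> germ_sub x Z Z1 \<or> germ_sub x Z Z2)"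

definition irreducible_component :: "(complex^'n) set \<Rightarrow> complex^'n \<Rightarrow> (complex^'n) set \<Rightarrow> bool" where
  "irreducible_component X x Z \<longleftrightarrow> irreducible_germ X x Z \<and>
     (\<forall>Z'. irreducible_germ X x Z' \<longrightarrow> germ_sub x Z Z' \<longrightarrow> germ_sub x Z' Z)"

definition rank_ge :: "nat \<Rightarrow> ('r \<Rightarrow> 'c \<Rightarrow> complex) \<Rightarrow> bool" where
  "rank_ge k A \<longleftrightarrow> (\<exists>rs cs. kdet k (\<lambda>i l. A (rs i) (cs l)) \<noteq> 0)"

definition generic_rank_on :: "complex^'n \<Rightarrow> (complex^'n) set \<Rightarrow> (complex^'n \<Rightarrow> 'r \<Rightarrow> 'c \<Rightarrow> complex) \<Rightarrow> nat \<Rightarrow> bool" where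
  "generic_rank_on x Z A k \<longleftrightarrow>
     (\<exists>U0. open U0 \<and> x \<in> U0 \<and> (\<forall>y\<in>Z \<inter> U0. \<not> rank_ge (Suc k) (A y))) \<and>
     (\<forall>U. open U \<longrightarrow> x \<in> U \<longrightarrow> (\<exists>y\<in>Z \<inter> U. rank_ge k (A y)))"

end

theory Submission
  imports Defs "Jordan_Normal_Form.Determinant"
begin

lemma holo_n_const: "holo_n UNIV (\<lambda>y. c)"
  unfolding holo_n_def by (auto intro!: exI[of _ "\<lambda>v. 0"])

lemma holo_n_subset: "holo_n U F \<Longrightarrow> open V \<Longrightarrow> V \<subseteq> U \<Longrightarrow> holo_n V F"
  unfolding holo_n_def by blast

lemma holo_n_add: assumes "holo_n U F" "holo_n U G" shows "holo_n U (\<lambda>y. F y + G y)"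
  unfolding holo_n_def
proof (intro conjI ballI)
  show "open U" using assms unfolding holo_n_def by auto
  fix z assume z: "z \<in> U"
  obtain L1 where L1: "(F has_derivative L1) (at z)" "\<forall>(c::complex) v. L1 (c *s v) = c * L1 v"
    using assms(1) z unfolding holo_n_def by blast
  obtain L2 where L2: "(G has_derivative L2) (at z)" "\<forall>(c::complex) v. L2 (c *s v) = c * L2 v"
    using assms(2) z unfolding holo_n_def by blast
  show "\<exists>L. ((\<lambda>y. F y + G y) has_derivative L) (at z) \<and> (\<forall>(c::complex) v. L (c *s v) = c * L v)"
    by (rule exI[of _ "\<lambda>v. L1 v + L2 v"]) (use L1 L2 in \<open>auto intro: has_derivative_add simp: distrib_left\<close>)
qed

lemma holo_n_mult: assumes "holo_n U F" "holo_n U G" shows "holo_n U (\<lambda>y. F y * G y)"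
  unfolding holo_n_def
proof (intro conjI ballI)
  show "open U" using assms unfolding holo_n_def by auto
  fix z assume z: "z \<in> U"
  obtain L1 where L1: "(F has_derivative L1) (at z)" "\<forall>(c::complex) v. L1 (c *s v) = c * L1 v"
    using assms(1) z unfolding holo_n_def by blast
  obtain L2 where L2: "(G has_derivative L2) (at z)" "\<forall>(c::complex) v. L2 (c *s v) = c * L2 v"
    using assms(2) z unfolding holo_n_def by blast
  show "\<exists>L. ((\<lambda>y. F y * G y) has_derivative L) (at z) \<and> (\<forall>(c::complex) v. L (c *s v) = c * L v)"
    apply (rule exI[of _ "\<lambda>v. F z * L2 v + L1 v * G z"], rule conjI)
     apply (rule has_derivative_mult[OF L1(1) L2(1)])
    using L1(2) L2(2) by (simp add: algebra_simps)
qed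

lemma anat_const: "anat X x (\<lambda>y. c)"
  unfolding anat_def by (rule exI[of _ UNIV], rule exI[of _ "\<lambda>y. c"]) (auto simp: holo_n_const)

lemma anat_add: assumes "anat X x f" "anat X x g" shows "anat X x (\<lambda>y. f y + g y)"
proof -
  obtain U F where U: "open U" "x \<in> U" "holo_n U F" "\<forall>y\<in>X \<inter> U. f y = F y"
    using assms(1) unfolding anat_def by blast
  obtain V G where V: "open V" "x \<in> V" "holo_n V G" "\<forall>y\<in>X \<inter> V. g y = G y"
    using assms(2) unfolding anat_def by blast
  have "holo_n (U \<inter> V) (\<lambda>y. F y + G y)"
    by (rule holo_n_add; rule holo_n_subset) (use U V in auto)
  then show ?thesis unfolding anat_def using U V
    by (intro exI[of _ "U \<inter> V"] exI[of _ "\<lambda>y. F y + G y"]) auto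
qed

lemma anat_mult: assumes "anat X x f" "anat X x g" shows "anat X x (\<lambda>y. f y * g y)"
proof -
  obtain U F where U: "open U" "x \<in> U" "holo_n U F" "\<forall>y\<in>X \<inter> U. f y = F y"
    using assms(1) unfolding anat_def by blast
  obtain V G where V: "open V" "x \<in> V" "holo_n V G" "\<forall>y\<in>X \<inter> V. g y = G y"
    using assms(2) unfolding anat_def by blast
  have "holo_n (U \<inter> V) (\<lambda>y. F y * G y)"
    by (rule holo_n_mult; rule holo_n_subset) (use U V in auto)
  then show ?thesis unfolding anat_def using U V
    by (intro exI[of _ "U \<inter> V"] exI[of _ "\<lambda>y. F y * G y"]) auto
qed

lemma anat_sum: "(\<And>i. i \<in> A \<Longrightarrow> anat X x (f i)) \<Longrightarrow> anat X x (\<lambda>y. \<Sum>i\<in>A. f i y)"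
proof (induction A rule: infinite_finite_induct)
  case (infinite A) then show ?case by (simp add: anat_const)
next
  case empty then show ?case by (simp add: anat_const)
next
  case (insert a A) then show ?case by (simp add: anat_add)
qed

lemma anat_prod: "(\<And>i. i \<in> A \<Longrightarrow> anat X x (f i)) \<Longrightarrow> anat X x (\<lambda>y. \<Prod>i\<in>A. f i y)"
proof (induction A rule: infinite_finite_induct)
  case (infinite A) then show ?case by (simp add: anat_const)
next
  case empty then show ?case by (simp add: anat_const)
next
  case (insert a A) then show ?case by (simp add: anat_mult)
qed

lemma anat_det:
  assumes "\<And>a b. anat X x (F a b)"
  shows "anat X x (\<lambda>y. det (mat n n (\<lambda>(a,b). F a b y)))"
proof -
  have eq: "det (mat n n (\<lambda>(a,b). F a b y)) = (\<Sum> p \<in> {p. p permutes {0 ..< n}}.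
     signof p * (\<Prod> i = 0 ..< n. F i (p i) y))" for y
    unfolding det_def'[OF mat_carrier]
    by (intro sum.cong refl arg_cong2[where f="(*)"] prod.cong) (auto simp: permutes_in_image)
  show ?thesis unfolding eq
    by (intro anat_sum anat_mult anat_const anat_prod assms)
qed


lemma anat_vec_comp: "anat_vec X x h \<Longrightarrow> anat X x (\<lambda>y. h y $ i)"
  unfolding anat_vec_def by blast

lemma germ_eq_refl: "germ_eq X x f f"
  unfolding germ_eq_def by (rule exI[of _ UNIV]) auto

lemma germ_eq_trans: "germ_eq X x f g \<Longrightarrow> germ_eq X x g h \<Longrightarrow> germ_eq X x f h"
  unfolding germ_eq_def
proof -
  assume "\<exists>U. open U \<and> x \<in> U \<and> (\<forall>y\<in>X \<inter> U. f y = g y)" "\<exists>U. open U \<and> x \<in> U \<and> (\<forall>y\<in>X \<inter> U. g y = h y)"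
  then obtain U V where "open U" "x \<in> U" "\<forall>y\<in>X \<inter> U. f y = g y" "open V" "x \<in> V" "\<forall>y\<in>X \<inter> V. g y = h y"
    by blast
  then show "\<exists>U. open U \<and> x \<in> U \<and> (\<forall>y\<in>X \<inter> U. f y = h y)"
    by (intro exI[of _ "U \<inter> V"]) auto
qed

lemma germ_eq_pointwise: "(\<And>y. f y = g y) \<Longrightarrow> germ_eq X x f g"
  using germ_eq_refl[of X x f] by (metis ext)

lemma sum_concat:
  "(\<Sum>l<N1+(N2::nat). (if l < N1 then F l else G (l - N1))) = (\<Sum>l<N1. F l) + (\<Sum>l<N2. (G l :: 'a::comm_monoid_add))"
proof (induction N2)
  case 0 then show ?case by (auto intro: sum.cong)
next
  case (Suc N2) then show ?case by (simp add: add.assoc)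
qed

definition ideal_like :: "(complex^'n) set \<Rightarrow> complex^'n \<Rightarrow> (complex^'n \<Rightarrow> complex) set \<Rightarrow> bool" where
  "ideal_like X x J \<longleftrightarrow> (\<lambda>y. 0) \<in> J \<and> (\<forall>f\<in>J. anat X x f) \<and>
     (\<forall>f g. f \<in> J \<longrightarrow> g \<in> J \<longrightarrow> (\<lambda>y. f y + g y) \<in> J) \<and>
     (\<forall>a f. anat X x a \<longrightarrow> f \<in> J \<longrightarrow> (\<lambda>y. a y * f y) \<in> J) \<and>
     (\<forall>f f'. anat X x f \<longrightarrow> germ_eq X x f f' \<longrightarrow> f' \<in> J \<longrightarrow> f \<in> J)"

lemma ideal_like_gen:
  assumes J: "ideal_like X x J" and S: "S \<subseteq> J"
  shows "ideal_gen X x S \<subseteq> J"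
proof
  fix f assume "f \<in> ideal_gen X x S"
  then obtain N :: nat and as gs where f: "anat X x f" and ags: "\<forall>l<N. anat X x (as l) \<and> gs l \<in> S"
    and ge: "germ_eq X x f (\<lambda>y. \<Sum>l<N. as l y * gs l y)"
    unfolding ideal_gen_def by blast
  have "n \<le> N \<Longrightarrow> (\<lambda>y. \<Sum>l<n. as l y * gs l y) \<in> J" for n
  proof (induction n)
    case 0 then show ?case using J unfolding ideal_like_def by simp
  next
    case (Suc n)
    have "n < N" using Suc.prems by simp
    then have "anat X x (as n)" "gs n \<in> J" using ags S by auto
    then have "(\<lambda>y. as n y * gs n y) \<in> J" using J unfolding ideal_like_def by blast
    then have "(\<lambda>y. (\<Sum>l<n. as l y * gs l y) + as n y * gs n y) \<in> J"
      using J Suc unfolding ideal_like_def by auto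
    then show ?case by simp
  qed
  then show "f \<in> J" using J f ge unfolding ideal_like_def by blast
qed

lemma ideal_gen_like: "ideal_like X x (ideal_gen X x S)"
  unfolding ideal_like_def
proof (intro conjI allI impI ballI)
  show "(\<lambda>y. 0) \<in> ideal_gen X x S" unfolding ideal_gen_def
    by (auto simp: anat_const germ_eq_refl intro!: exI[of _ 0])
  show "anat X x f" if "f \<in> ideal_gen X x S" for f using that unfolding ideal_gen_def by blast
  show "(\<lambda>y. f y + g y) \<in> ideal_gen X x S" if A: "f \<in> ideal_gen X x S" "g \<in> ideal_gen X x S" for f g
  proof -
    obtain N1 :: nat and as1 gs1 where f: "anat X x f" and a1: "\<forall>l<N1. anat X x (as1 l) \<and> gs1 l \<in> S"
      and g1: "germ_eq X x f (\<lambda>y. \<Sum>l<N1. as1 l y * gs1 l y)"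
      using A(1) unfolding ideal_gen_def by blast
    obtain N2 :: nat and as2 gs2 where g: "anat X x g" and a2: "\<forall>l<N2. anat X x (as2 l) \<and> gs2 l \<in> S"
      and g2: "germ_eq X x g (\<lambda>y. \<Sum>l<N2. as2 l y * gs2 l y)"
      using A(2) unfolding ideal_gen_def by blast
    define as where "as l = (if l < N1 then as1 l else as2 (l - N1))" for l
    define gs where "gs l = (if l < N1 then gs1 l else gs2 (l - N1))" for l
    have eq: "(\<Sum>l<N1+N2. as l y * gs l y) = (\<Sum>l<N1. as1 l y * gs1 l y) + (\<Sum>l<N2. as2 l y * gs2 l y)" for y
    proof -
      have "(\<Sum>l<N1+N2. as l y * gs l y) = (\<Sum>l<N1+N2. if l < N1 then as1 l y * gs1 l y else as2 (l-N1) y * gs2 (l-N1) y)"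
        unfolding as_def gs_def by (intro sum.cong) auto
      then show ?thesis using sum_concat by simp
    qed
    have ags: "\<forall>l<N1+N2. anat X x (as l) \<and> gs l \<in> S"
      using a1 a2 unfolding as_def gs_def by auto
    have "germ_eq X x (\<lambda>y. f y + g y) (\<lambda>y. \<Sum>l<N1+N2. as l y * gs l y)"
    proof -
      obtain U1 where U1: "open U1" "x \<in> U1" "\<forall>y\<in>X \<inter> U1. f y = (\<Sum>l<N1. as1 l y * gs1 l y)"
        using g1 unfolding germ_eq_def by blast
      obtain U2 where U2: "open U2" "x \<in> U2" "\<forall>y\<in>X \<inter> U2. g y = (\<Sum>l<N2. as2 l y * gs2 l y)"
        using g2 unfolding germ_eq_def by blast
      show ?thesis unfolding germ_eq_def eq using U1 U2
        by (intro exI[of _ "U1 \<inter> U2"]) auto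
    qed
    then show ?thesis unfolding ideal_gen_def using ags f g anat_add by blast
  qed
  show "(\<lambda>y. a y * f y) \<in> ideal_gen X x S" if A: "anat X x a" "f \<in> ideal_gen X x S" for a f
  proof -
    obtain N :: nat and as gs where f: "anat X x f" and a1: "\<forall>l<N. anat X x (as l) \<and> gs l \<in> S"
      and g1: "germ_eq X x f (\<lambda>y. \<Sum>l<N. as l y * gs l y)"
      using A(2) unfolding ideal_gen_def by blast
    have "germ_eq X x (\<lambda>y. a y * f y) (\<lambda>y. \<Sum>l<N. (a y * as l y) * gs l y)"
      using g1 unfolding germ_eq_def by (auto simp: sum_distrib_left[symmetric] mult.assoc)
    moreover have "\<forall>l<N. anat X x (\<lambda>y. a y * as l y) \<and> gs l \<in> S" using a1 A(1) anat_mult by blast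
    ultimately show ?thesis unfolding ideal_gen_def using anat_mult[OF A(1) f]
      by (intro CollectI conjI exI[of _ N] exI[of _ "\<lambda>l y. a y * as l y"] exI[of _ gs]) auto
  qed
  show "f \<in> ideal_gen X x S" if "anat X x f" "germ_eq X x f f'" "f' \<in> ideal_gen X x S" for f f'
    using that unfolding ideal_gen_def using germ_eq_trans by blast
qed

lemma curve_into:
  assumes "curve_germ X x \<phi>" "open U" "x \<in> U"
  shows "\<exists>e>0. \<forall>t\<in>ball 0 e. \<phi> t \<in> X \<and> \<phi> t \<in> U"
proof -
  obtain r where r: "r > 0" "\<forall>i. (\<lambda>t. \<phi> t $ i) holomorphic_on ball 0 r" "\<phi> ` ball 0 r \<subseteq> X" "\<phi> 0 = x"
    using assms(1) unfolding curve_germ_def by blast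
  have "continuous_on (ball 0 r) (\<lambda>t. \<chi> i. \<phi> t $ i)"
    by (intro continuous_on_vec_lambda holomorphic_on_imp_continuous_on) (use r in auto)
  then have c: "continuous_on (ball 0 r) \<phi>" by simp
  have "open (\<phi> -` U \<inter> ball 0 r)" using c assms(2) continuous_on_open_vimage[of "ball 0 r" \<phi>] by auto
  moreover have "0 \<in> \<phi> -` U \<inter> ball 0 r" using r assms(3) by auto
  ultimately obtain e where e: "e > 0" "ball 0 e \<subseteq> \<phi> -` U \<inter> ball 0 r"
    using open_contains_ball by blast
  then show ?thesis using r(3) by (intro exI[of _ e]) auto
qed


lemma ideal_gen_mult: "anat X x a \<Longrightarrow> f \<in> ideal_gen X x S \<Longrightarrow> (\<lambda>y. a y * f y) \<in> ideal_gen X x S"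
  using ideal_gen_like[of X x S] unfolding ideal_like_def by blast

lemma lip_sat_like: "ideal_like X x (lip_sat X x S)"
  unfolding ideal_like_def
proof (intro conjI allI impI ballI)
  show "(\<lambda>y. 0) \<in> lip_sat X x S" unfolding lip_sat_def
  proof (intro CollectI conjI allI impI)
    show "anat X x (\<lambda>y. 0)" by (rule anat_const)
    fix \<phi>1 \<phi>2
    show "\<exists>r>0. \<exists>(N::nat) bs gs. (\<forall>l<N. bs l holomorphic_on ball 0 r \<and> gs l \<in> ideal_gen X x S) \<and>
         (\<forall>t\<in>ball 0 r. 0 = (\<Sum>l<N. bs l t * gs l (\<phi>1 t)) \<and> 0 = (\<Sum>l<N. bs l t * gs l (\<phi>2 t)))"
      by (rule exI[of _ 1]) (auto intro!: exI[of _ 0])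
  qed
  show "anat X x f" if "f \<in> lip_sat X x S" for f using that unfolding lip_sat_def by blast
  show "(\<lambda>y. f y + g y) \<in> lip_sat X x S" if A: "f \<in> lip_sat X x S" "g \<in> lip_sat X x S" for f g
    unfolding lip_sat_def
  proof (intro CollectI conjI allI impI)
    show "anat X x (\<lambda>y. f y + g y)" using A unfolding lip_sat_def by (auto intro: anat_add)
    fix \<phi>1 \<phi>2 assume c: "curve_germ X x \<phi>1" "curve_germ X x \<phi>2"
    obtain r1 N1 bs1 gs1 where r1: "r1 > 0" "\<forall>l<(N1::nat). bs1 l holomorphic_on ball 0 r1 \<and> gs1 l \<in> ideal_gen X x S"
      "\<forall>t\<in>ball 0 r1. f (\<phi>1 t) = (\<Sum>l<N1. bs1 l t * gs1 l (\<phi>1 t)) \<and> f (\<phi>2 t) = (\<Sum>l<N1. bs1 l t * gs1 l (\<phi>2 t))"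
      using A(1) c unfolding lip_sat_def by blast
    obtain r2 N2 bs2 gs2 where r2: "r2 > 0" "\<forall>l<(N2::nat). bs2 l holomorphic_on ball 0 r2 \<and> gs2 l \<in> ideal_gen X x S"
      "\<forall>t\<in>ball 0 r2. g (\<phi>1 t) = (\<Sum>l<N2. bs2 l t * gs2 l (\<phi>1 t)) \<and> g (\<phi>2 t) = (\<Sum>l<N2. bs2 l t * gs2 l (\<phi>2 t))"
      using A(2) c unfolding lip_sat_def by blast
    define bs where "bs l = (if l < N1 then bs1 l else bs2 (l - N1))" for l
    define gs where "gs l = (if l < N1 then gs1 l else gs2 (l - N1))" for l
    have eq: "(\<Sum>l<N1+N2. bs l t * gs l z) = (\<Sum>l<N1. bs1 l t * gs1 l z) + (\<Sum>l<N2. bs2 l t * gs2 l z)" for t z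
    proof -
      have "(\<Sum>l<N1+N2. bs l t * gs l z) = (\<Sum>l<N1+N2. if l < N1 then bs1 l t * gs1 l z else bs2 (l-N1) t * gs2 (l-N1) z)"
        unfolding bs_def gs_def by (intro sum.cong) auto
      then show ?thesis using sum_concat by simp
    qed
    have hol: "\<forall>l<N1+N2. bs l holomorphic_on ball 0 (min r1 r2) \<and> gs l \<in> ideal_gen X x S"
    proof (intro allI impI)
      fix l assume l: "l < N1 + N2"
      show "bs l holomorphic_on ball 0 (min r1 r2) \<and> gs l \<in> ideal_gen X x S"
      proof (cases "l < N1")
        case True then show ?thesis using r1(2) unfolding bs_def gs_def
          by (auto intro: holomorphic_on_subset[of _ "ball 0 r1"])
      next
        case False then have "l - N1 < N2" using l by simp
        then show ?thesis using False r2(2) unfolding bs_def gs_def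
          by (auto intro: holomorphic_on_subset[of _ "ball 0 r2"])
      qed
    qed
    show "\<exists>r>0. \<exists>(N::nat) bs gs. (\<forall>l<N. bs l holomorphic_on ball 0 r \<and> gs l \<in> ideal_gen X x S) \<and>
         (\<forall>t\<in>ball 0 r. f (\<phi>1 t) + g (\<phi>1 t) = (\<Sum>l<N. bs l t * gs l (\<phi>1 t)) \<and>
                        f (\<phi>2 t) + g (\<phi>2 t) = (\<Sum>l<N. bs l t * gs l (\<phi>2 t)))"
      apply (rule exI[of _ "min r1 r2"], rule conjI, simp add: r1 r2)
      apply (rule exI[of _ "N1+N2"], rule exI[of _ bs], rule exI[of _ gs])
      using hol r1(3) r2(3) unfolding eq by auto
  qed
  show "(\<lambda>y. a y * f y) \<in> lip_sat X x S" if A: "anat X x a" "f \<in> lip_sat X x S" for a f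
    unfolding lip_sat_def
  proof (intro CollectI conjI allI impI)
    show "anat X x (\<lambda>y. a y * f y)" using A unfolding lip_sat_def by (auto intro: anat_mult)
    fix \<phi>1 \<phi>2 assume c: "curve_germ X x \<phi>1" "curve_germ X x \<phi>2"
    obtain r N bs gs where r: "r > 0" "\<forall>l<(N::nat). bs l holomorphic_on ball 0 r \<and> gs l \<in> ideal_gen X x S"
      "\<forall>t\<in>ball 0 r. f (\<phi>1 t) = (\<Sum>l<N. bs l t * gs l (\<phi>1 t)) \<and> f (\<phi>2 t) = (\<Sum>l<N. bs l t * gs l (\<phi>2 t))"
      using A(2) c unfolding lip_sat_def by blast
    have hol: "\<forall>l<N. bs l holomorphic_on ball 0 r \<and> (\<lambda>y. a y * gs l y) \<in> ideal_gen X x S"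
      using r(2) ideal_gen_mult[OF A(1)] by auto
    have eq: "a z * (\<Sum>l<N. bs l t * gs l z) = (\<Sum>l<N. bs l t * (a z * gs l z))" for z t
      by (simp add: sum_distrib_left algebra_simps)
    show "\<exists>r>0. \<exists>(N::nat) bs gs. (\<forall>l<N. bs l holomorphic_on ball 0 r \<and> gs l \<in> ideal_gen X x S) \<and>
         (\<forall>t\<in>ball 0 r. a (\<phi>1 t) * f (\<phi>1 t) = (\<Sum>l<N. bs l t * gs l (\<phi>1 t)) \<and>
                        a (\<phi>2 t) * f (\<phi>2 t) = (\<Sum>l<N. bs l t * gs l (\<phi>2 t)))"
      apply (rule exI[of _ r], rule conjI, simp add: r)
      apply (rule exI[of _ N], rule exI[of _ bs], rule exI[of _ "\<lambda>l y. a y * gs l y"])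
      using hol r(3) eq by auto
  qed
  show "f \<in> lip_sat X x S" if A: "anat X x f" "germ_eq X x f f'" "f' \<in> lip_sat X x S" for f f'
    unfolding lip_sat_def
  proof (intro CollectI conjI allI impI)
    show "anat X x f" by (rule A(1))
    fix \<phi>1 \<phi>2 assume c: "curve_germ X x \<phi>1" "curve_germ X x \<phi>2"
    obtain U where U: "open U" "x \<in> U" "\<forall>y\<in>X \<inter> U. f y = f' y" using A(2) unfolding germ_eq_def by blast
    obtain e1 where e1: "e1 > 0" "\<forall>t\<in>ball 0 e1. \<phi>1 t \<in> X \<and> \<phi>1 t \<in> U" using curve_into[OF c(1) U(1,2)] by blast
    obtain e2 where e2: "e2 > 0" "\<forall>t\<in>ball 0 e2. \<phi>2 t \<in> X \<and> \<phi>2 t \<in> U" using curve_into[OF c(2) U(1,2)] by blast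
    obtain r N bs gs where r: "r > 0" "\<forall>l<(N::nat). bs l holomorphic_on ball 0 r \<and> gs l \<in> ideal_gen X x S"
      "\<forall>t\<in>ball 0 r. f' (\<phi>1 t) = (\<Sum>l<N. bs l t * gs l (\<phi>1 t)) \<and> f' (\<phi>2 t) = (\<Sum>l<N. bs l t * gs l (\<phi>2 t))"
      using A(3) c unfolding lip_sat_def by blast
    define r' where "r' = min r (min e1 e2)"
    have r'0: "r' > 0" using r e1 e2 unfolding r'_def by auto
    have sub: "ball 0 r' \<subseteq> ball 0 r" "ball 0 r' \<subseteq> ball 0 e1" "ball 0 r' \<subseteq> ball 0 e2" unfolding r'_def by auto
    have hol: "\<forall>l<N. bs l holomorphic_on ball 0 r' \<and> gs l \<in> ideal_gen X x S"
      using r(2) sub(1) by (auto intro: holomorphic_on_subset)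
    have eqs: "\<forall>t\<in>ball 0 r'. f (\<phi>1 t) = (\<Sum>l<N. bs l t * gs l (\<phi>1 t)) \<and> f (\<phi>2 t) = (\<Sum>l<N. bs l t * gs l (\<phi>2 t))"
    proof
      fix t :: complex assume t: "t \<in> ball 0 r'"
      then have "f (\<phi>1 t) = f' (\<phi>1 t)" "f (\<phi>2 t) = f' (\<phi>2 t)" using U(3) e1(2) e2(2) sub by blast+
      then show "f (\<phi>1 t) = (\<Sum>l<N. bs l t * gs l (\<phi>1 t)) \<and> f (\<phi>2 t) = (\<Sum>l<N. bs l t * gs l (\<phi>2 t))"
      proof -
        have "t \<in> ball 0 r" using t sub(1) by blast
        then show ?thesis using r(3) \<open>f (\<phi>1 t) = f' (\<phi>1 t)\<close> \<open>f (\<phi>2 t) = f' (\<phi>2 t)\<close> by simp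
      qed
    qed
    show "\<exists>r>0. \<exists>(N::nat) bs gs. (\<forall>l<N. bs l holomorphic_on ball 0 r \<and> gs l \<in> ideal_gen X x S) \<and>
         (\<forall>t\<in>ball 0 r. f (\<phi>1 t) = (\<Sum>l<N. bs l t * gs l (\<phi>1 t)) \<and>
                        f (\<phi>2 t) = (\<Sum>l<N. bs l t * gs l (\<phi>2 t)))"
      using r'0 hol eqs by blast
  qed
qed

lemma ideal_gen_sub_lip_sat: "ideal_gen X x S \<subseteq> lip_sat X x S"
proof
  fix f assume f: "f \<in> ideal_gen X x S"
  show "f \<in> lip_sat X x S" unfolding lip_sat_def
  proof (intro CollectI conjI allI impI)
    show "anat X x f" using f unfolding ideal_gen_def by blast
    fix \<phi>1 \<phi>2
    show "\<exists>r>0. \<exists>(N::nat) bs gs. (\<forall>l<N. bs l holomorphic_on ball 0 r \<and> gs l \<in> ideal_gen X x S) \<and>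
         (\<forall>t\<in>ball 0 r. f (\<phi>1 t) = (\<Sum>l<N. bs l t * gs l (\<phi>1 t)) \<and> f (\<phi>2 t) = (\<Sum>l<N. bs l t * gs l (\<phi>2 t)))"
      apply (rule exI[of _ 1], rule conjI, simp)
      apply (rule exI[of _ 1], rule exI[of _ "\<lambda>l t. 1"], rule exI[of _ "\<lambda>l. f"])
      using f by auto
  qed
qed

lemma lip_sat_mono: "ideal_gen X x S \<subseteq> ideal_gen X x T \<Longrightarrow> lip_sat X x S \<subseteq> lip_sat X x T"
  unfolding lip_sat_def by blast

lemma gen_self: "(\<And>f. f \<in> S \<Longrightarrow> anat X x f) \<Longrightarrow> S \<subseteq> ideal_gen X x S"
proof
  fix f assume A: "\<And>f. f \<in> S \<Longrightarrow> anat X x f" and f: "f \<in> S"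
  show "f \<in> ideal_gen X x S" unfolding ideal_gen_def
    apply (intro CollectI conjI A f)
    apply (rule exI[of _ 1], rule exI[of _ "\<lambda>l y. 1"], rule exI[of _ "\<lambda>l. f"])
    using f by (auto simp: anat_const germ_eq_refl)
qed


lemma perm_lt: "p permutes {..<k} \<Longrightarrow> i < k \<Longrightarrow> p i < (k::nat)"
  using permutes_in_image[of p "{..<k}" i] by simp

lemma kdet_det: "kdet k A = det (mat k k (\<lambda>(i,j). A i j))"
  unfolding kdet_def det_def'[OF mat_carrier] atLeast0LessThan
  by (intro sum.cong refl arg_cong2[where f="(*)"] prod.cong) (auto simp: perm_lt)

lemma mat_cong_k: "(\<And>i l. i < k \<Longrightarrow> l < k \<Longrightarrow> f (i,l) = f' (i,l)) \<Longrightarrow> mat k k f = mat k k f'"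
  by (rule eq_matI) auto

lemma mat_delete_mat:
  "mat_delete (mat k k f) i j = mat (k-1) (k-1) (\<lambda>(a,b). f (insert_index i a, insert_index j b))"
  unfolding mat_delete_def insert_index_def by (rule eq_matI) auto

lemma laplace_repl:
  assumes "l0 < k"
  shows "det (mat k k (\<lambda>(i,l). if l = l0 then v i else E i l)) =
         (\<Sum>i<k. v i * cofactor (mat k k (\<lambda>(i,l). E i l)) i l0)"
proof -
  have "det (mat k k (\<lambda>(i,l). if l = l0 then v i else E i l)) =
     (\<Sum>i<k. mat k k (\<lambda>(i,l). if l = l0 then v i else E i l) $$ (i,l0) *
        cofactor (mat k k (\<lambda>(i,l). if l = l0 then v i else E i l)) i l0)"
    by (rule laplace_expansion_column[OF mat_carrier assms])
  also have "\<dots> = (\<Sum>i<k. v i * cofactor (mat k k (\<lambda>(i,l). E i l)) i l0)"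
  proof (intro sum.cong refl)
    fix i assume i: "i \<in> {..<k}"
    have "mat_delete (mat k k (\<lambda>(i,l). if l = l0 then v i else E i l)) i l0 =
          mat_delete (mat k k (\<lambda>(i,l). E i l)) i l0"
      unfolding mat_delete_mat by (intro mat_cong_k) auto
    then show "mat k k (\<lambda>(i,l). if l = l0 then v i else E i l) $$ (i,l0) *
        cofactor (mat k k (\<lambda>(i,l). if l = l0 then v i else E i l)) i l0 =
        v i * cofactor (mat k k (\<lambda>(i,l). E i l)) i l0"
      using i assms unfolding cofactor_def by simp
  qed
  finally show ?thesis .
qed

lemma det_two_cols:
  assumes "l0 < k" "l1 < k" "l0 \<noteq> l1" "\<And>i. E i l0 = E i l1"
  shows "det (mat k k (\<lambda>(i,l). E i l)) = 0"
  by (rule det_identical_columns[OF mat_carrier assms(3,1,2)]) (rule eq_vecI, auto simp: assms(1,2,4))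


lemma pair_dot_lin:
  "pair_dot \<psi> (\<lambda>y. \<Sum>l<N. as l y *s gs l y) y = (\<Sum>l<N. as l y * pair_dot \<psi> (gs l) y)"
proof -
  have "pair_dot \<psi> (\<lambda>y. \<Sum>l<N. as l y *s gs l y) y = (\<Sum>i\<in>UNIV. \<Sum>l<N. \<psi> y $ i * (as l y * gs l y $ i))"
    by (simp add: pair_dot_def sum_component sum_distrib_left)
  also have "\<dots> = (\<Sum>l<N. \<Sum>i\<in>UNIV. \<psi> y $ i * (as l y * gs l y $ i))" by (rule sum.swap)
  also have "\<dots> = (\<Sum>l<N. as l y * pair_dot \<psi> (gs l) y)"
    by (simp add: pair_dot_def sum_distrib_left mult.left_commute)
  finally show ?thesis .
qed

lemma minor_in_lip:
  fixes g :: "'m::finite \<Rightarrow> complex^'n \<Rightarrow> complex^'p" and h :: "complex^'n \<Rightarrow> complex^'p"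
  assumes ganat: "\<forall>j. anat_vec X x (g j)" and hS2: "h \<in> M_S2 X x (module_gen X x (range g))"
    and mm: "m \<in> minors k (mat_hM h g)"
  shows "m \<in> lip_sat X x (minors k (mat_of g))"
proof -
  let ?T = "minors k (mat_of g)"
  have hanat: "anat_vec X x h" using hS2 unfolding M_S2_def by blast
  obtain rs :: "nat \<Rightarrow> 'p" and cs :: "nat \<Rightarrow> 'm option"
    where m: "m = (\<lambda>y. kdet k (\<lambda>i l. mat_hM h g y (rs i) (cs l)))"
    using mm unfolding minors_def by blast
  define E where "E i l y = mat_hM h g y (rs i) (cs l)" for i l y
  have Eanat: "anat X x (E i l)" for i l
  proof (cases "cs l")
    case None
    then have "E i l = (\<lambda>y. h y $ rs i)" unfolding E_def mat_hM_def by auto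
    then show ?thesis using anat_vec_comp[OF hanat] by simp
  next
    case (Some j)
    then have "E i l = (\<lambda>y. g j y $ rs i)" unfolding E_def mat_hM_def by auto
    then show ?thesis using anat_vec_comp[OF ganat[rule_format, of j]] by simp
  qed
  have mdet: "m = (\<lambda>y. det (mat k k (\<lambda>(i,l). E i l y)))" unfolding m kdet_det E_def by simp
  have Tanat: "anat X x f" if fT: "f \<in> ?T" for f
  proof -
    obtain rs' :: "nat \<Rightarrow> 'p" and cs' :: "nat \<Rightarrow> 'm"
      where f: "f = (\<lambda>y. kdet k (\<lambda>i l. mat_of g y (rs' i) (cs' l)))"
      using fT unfolding minors_def by blast
    have "anat X x (\<lambda>y. det (mat k k (\<lambda>(a,b). (\<lambda>a b y. g (cs' b) y $ rs' a) a b y)))"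
      by (rule anat_det) (rule anat_vec_comp, rule ganat[rule_format])
    then show ?thesis unfolding f kdet_det mat_of_def by simp
  qed
  have TL: "?T \<subseteq> lip_sat X x ?T" using gen_self[of ?T X x] Tanat ideal_gen_sub_lip_sat by blast
  have lip: "ideal_like X x (lip_sat X x ?T)" by (rule lip_sat_like)
  consider (A) "\<forall>l<k. cs l \<noteq> None"
    | (B) l0 l1 where "l0 < k" "l1 < k" "l0 \<noteq> l1" "cs l0 = None" "cs l1 = None"
    | (C) l0 where "l0 < k" "cs l0 = None" "\<forall>l<k. l \<noteq> l0 \<longrightarrow> cs l \<noteq> None"
    by blast
  then show ?thesis
  proof cases
    case A
    define cs' where "cs' l = the (cs l)" for l
    have "m = (\<lambda>y. kdet k (\<lambda>i l. mat_of g y (rs i) (cs' l)))"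
      unfolding mdet kdet_det
    proof (rule ext, intro arg_cong[where f=det] mat_cong_k)
      fix y i l assume "i < k" "l < k"
      then show "(\<lambda>(i,l). E i l y) (i,l) = (\<lambda>(i,j). mat_of g y (rs i) (cs' j)) (i,l)"
        using A unfolding E_def mat_hM_def mat_of_def cs'_def by (cases "cs l") auto
    qed
    then have "m \<in> ?T" unfolding minors_def by blast
    then show ?thesis using TL by blast
  next
    case B
    have "m = (\<lambda>y. 0)" unfolding mdet
      by (rule ext, rule det_two_cols[OF B(1,2,3)]) (simp add: E_def B(4,5))
    then show ?thesis using lip unfolding ideal_like_def by simp
  next
    case C
    define Cf where "Cf i y = cofactor (mat k k (\<lambda>(i,l). E i l y)) i l0" for i y
    define \<psi> :: "complex^'n \<Rightarrow> complex^'p" where "\<psi> y = (\<chi> p. \<Sum>i<k. if rs i = p then Cf i y else 0)" for y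
    have key: "pair_dot \<psi> w y = det (mat k k (\<lambda>(i,l). if l = l0 then w y $ rs i else E i l y))" for w y
    proof -
      have "pair_dot \<psi> w y = (\<Sum>p\<in>UNIV. \<Sum>i<k. if rs i = p then Cf i y * w y $ p else 0)"
        unfolding pair_dot_def \<psi>_def by (auto simp: sum_distrib_right intro!: sum.cong)
      also have "\<dots> = (\<Sum>i<k. \<Sum>p\<in>UNIV. if rs i = p then Cf i y * w y $ p else 0)" by (rule sum.swap)
      also have "\<dots> = (\<Sum>i<k. w y $ rs i * Cf i y)" by (simp add: mult.commute)
      also have "\<dots> = det (mat k k (\<lambda>(i,l). if l = l0 then w y $ rs i else E i l y))"
        unfolding Cf_def by (rule laplace_repl[OF C(1), symmetric])
      finally show ?thesis .
    qed
    have Cf_anat: "anat X x (Cf i)" for i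
    proof -
      have "Cf i = (\<lambda>y. (-1)^(i+l0) * det (mat (k-1) (k-1) (\<lambda>(a,b). (\<lambda>a b. E (insert_index i a) (insert_index l0 b)) a b y)))"
        unfolding Cf_def cofactor_def mat_delete_mat by (simp add: case_prod_unfold)
      moreover have "anat X x (\<lambda>y. (-1)^(i+l0) * det (mat (k-1) (k-1) (\<lambda>(a,b). (\<lambda>a b. E (insert_index i a) (insert_index l0 b)) a b y)))"
        by (intro anat_mult anat_const anat_det Eanat)
      ultimately show ?thesis by simp
    qed
    have \<psi>anat: "anat_vec X x \<psi>" unfolding anat_vec_def
    proof
      fix p
      have "anat X x (\<lambda>y. \<Sum>i<k. if rs i = p then Cf i y else 0)"
      proof (rule anat_sum)
        fix i show "anat X x (\<lambda>y. if rs i = p then Cf i y else 0)"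
          by (cases "rs i = p") (simp_all add: anat_const Cf_anat)
      qed
      then show "anat X x (\<lambda>y. \<psi> y $ p)" unfolding \<psi>_def by simp
    qed
    have hm: "pair_dot \<psi> h = m" unfolding mdet
    proof (rule ext, subst key, intro arg_cong[where f=det] mat_cong_k)
      fix y i l show "(\<lambda>(i,l). if l = l0 then h y $ rs i else E i l y) (i,l) = (\<lambda>(i,l). E i l y) (i,l)"
        by (simp add: E_def mat_hM_def C(2))
    qed
    have gj: "pair_dot \<psi> (g j) \<in> ?T" for j
    proof -
      define cs'' where "cs'' l = (if l = l0 then j else the (cs l))" for l
      have "pair_dot \<psi> (g j) = (\<lambda>y. kdet k (\<lambda>i l. mat_of g y (rs i) (cs'' l)))"
        unfolding kdet_det
      proof (rule ext, subst key, intro arg_cong[where f=det] mat_cong_k)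
        fix y i l assume "i < k" "l < k"
        then show "(\<lambda>(i,l). if l = l0 then g j y $ rs i else E i l y) (i,l) = (\<lambda>(i,l). mat_of g y (rs i) (cs'' l)) (i,l)"
          using C(3) unfolding E_def mat_hM_def mat_of_def cs''_def by (cases "cs l") auto
      qed
      then show ?thesis unfolding minors_def by blast
    qed
    have sub: "(\<lambda>g'. pair_dot \<psi> g') ` module_gen X x (range g) \<subseteq> ideal_gen X x ?T"
    proof
      fix f assume "f \<in> (\<lambda>g'. pair_dot \<psi> g') ` module_gen X x (range g)"
      then obtain h' where f: "f = pair_dot \<psi> h'" and h': "h' \<in> module_gen X x (range g)" by blast
      obtain N :: nat and as gs where h'a: "anat_vec X x h'" and ags: "\<forall>l<N. anat X x (as l) \<and> gs l \<in> range g"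
        and ge: "germ_eq X x h' (\<lambda>y. \<Sum>l<N. as l y *s gs l y)"
        using h' unfolding module_gen_def by blast
      have fa: "anat X x f" unfolding f pair_dot_def
        by (intro anat_sum anat_mult anat_vec_comp \<psi>anat h'a)
      have ags': "\<forall>l<N. anat X x (as l) \<and> pair_dot \<psi> (gs l) \<in> ?T" using ags gj by auto
      obtain U where U: "open U" "x \<in> U" "\<forall>y\<in>X \<inter> U. h' y = (\<Sum>l<N. as l y *s gs l y)"
        using ge unfolding germ_eq_def by blast
      have "germ_eq X x f (\<lambda>y. \<Sum>l<N. as l y * pair_dot \<psi> (gs l) y)"
        unfolding germ_eq_def
      proof (intro exI[of _ U] conjI ballI U(1,2))
        fix y assume y: "y \<in> X \<inter> U"
        have "f y = pair_dot \<psi> (\<lambda>y. \<Sum>l<N. as l y *s gs l y) y"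
          unfolding f pair_dot_def using U(3) y by simp
        then show "f y = (\<Sum>l<N. as l y * pair_dot \<psi> (gs l) y)" using pair_dot_lin by simp
      qed
      then show "f \<in> ideal_gen X x ?T" unfolding ideal_gen_def
        by (intro CollectI conjI fa exI[of _ N] exI[of _ as] exI[of _ "\<lambda>l. pair_dot \<psi> (gs l)"]) (use ags' in auto)
    qed
    have "ideal_gen X x ((\<lambda>g'. pair_dot \<psi> g') ` module_gen X x (range g)) \<subseteq> ideal_gen X x ?T"
      by (rule ideal_like_gen[OF ideal_gen_like sub])
    then have "lip_sat X x ((\<lambda>g'. pair_dot \<psi> g') ` module_gen X x (range g)) \<subseteq> lip_sat X x ?T"
      by (rule lip_sat_mono)
    moreover have "pair_dot \<psi> h \<in> lip_sat X x ((\<lambda>g'. pair_dot \<psi> g') ` module_gen X x (range g))"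
      using hS2 \<psi>anat unfolding M_S2_def by blast
    ultimately show ?thesis using hm by auto
  qed
qed

theorem proposition2p11:
  fixes X :: "(complex^'n) set" and x :: "complex^'n"
    and g :: "'m::finite \<Rightarrow> complex^'n \<Rightarrow> complex^'p" and k :: nat
  assumes "analytic_variety X" and "x \<in> X"
    and "\<forall>j. anat_vec X x (g j)"
    and "\<forall>Z. irreducible_component X x Z \<longrightarrow> generic_rank_on x Z (mat_of g) k"
  shows "M_S2 X x (module_gen X x (range g)) \<subseteq> M_S3 X x k g"
proof
  fix h assume h: "h \<in> M_S2 X x (module_gen X x (range g))"
  have "anat_vec X x h" using h unfolding M_S2_def by blast
  moreover have "Ik X x k (mat_hM h g) \<subseteq> lip_sat X x (minors k (mat_of g))"
    unfolding Ik_def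
    by (rule ideal_like_gen[OF lip_sat_like]) (use minor_in_lip[OF assms(3) h] in blast)
  ultimately show "h \<in> M_S3 X x k g" unfolding M_S3_def by blast
qed

end
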